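(* Consider a sequence of finite populations indexed by $n\to\infty$, each satisfying Assumption 1, Assumption 2 and the null hypothesis $H_0:\ T_i(1)=T_i(0)$ for all $i$, and condition on all potential event times. Then $$\sum_{k=1}^{K-1}\xi_{4k}=\sum_{k=1}^{K-1}\big\{\mathbb{E}(D_k\mid\boldsymbol{T}(1),\boldsymbol{T}(0))(1-h_k)\phi_k(1-\phi_k)-\mathbb{E}(V_k\mid\boldsymbol{T}(1),\boldsymbol{T}(0))\big\}=\log n\cdot O(1).$$
   Context: Unit $i$ ($1\le i\le n$) has potential event times $T_i(1),T_i(0)\ge 0$ (fixed constants), potential censoring times $C_i(1),C_i(0)\in[0,\infty]$, treatment indicator $Z_i\in\{0,1\}$; bold letters denote $n$-vectors. Assumption 1: conditional on all potential event and censoring times, the $Z_i$ are i.i.d. Bernoulli$(p_1)$, $p_1=1-p_0\in(0,1)$. Assumption 2: $(\boldsymbol{C}(1),\boldsymbol{C}(0))$ is independent of $(\boldsymbol{T}(1),\boldsymbol{T}(0))$ and the pairs $(C_i(1),C_i(0))$ are i.i.d. across $i$. $G_z(c)=\Pr(C_i(z)\ge c)$, $G(t)=p_1G_1(t)+p_0G_0(t)$. Realized: $W_i=\min\{T_i,C_i\}$, $\Delta_i=\mathbb{1}(T_i\le C_i)$ with $T_i=Z_iT_i(1)+(1-Z_i)T_i(0)$, $C_i=Z_iC_i(1)+(1-Z_i)C_i(0)$. Let $t_1<\dots<t_K$ be the distinct values of $\{T_i(0)\}$, $d_k=\#\{i:T_i(0)=t_k\}$, $n_k=\#\{i:T_i(0)\ge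 t_k\}$, $h_k=d_k/n_k$, $\phi_k=p_1G_1(t_k)/G(t_k)$; $N_{1k},N_{0k}$ the numbers of treated / control units with $W_i\ge t_k$, $N_k=N_{1k}+N_{0k}$, $D_k=\sum_i\Delta_i\mathbb{1}(W_i=t_k)$, $V_k=D_k(N_k-D_k)N_{1k}N_{0k}/\{N_k^2(N_k-1)\}$ (convention $0/0:=0$). $a_n=b_nO(1)$ means $a_n/b_n$ is bounded as $n\to\infty$. *)

theory Defs
  imports "HOL-Probability.Probability" "HOL-Library.Landau_Symbols"
begin

text \<open>Population of size n, units indexed 0..n-1. Under H0, T_i(1) = T_i(0) = T i (fixed).
 A sample point assigns to unit i the triple (Z_i, (C_i(1), C_i(0))), Z_i encoded as bool.
 Censoring times take values in [0,\<infinity>], modelled by ennreal.\<close>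

type_synonym outcome = "nat \<Rightarrow> bool \<times> (ennreal \<times> ennreal)"

text \<open>Joint law of (Z, C(1), C(0)) given the potential event times:
 Z_i iid Bernoulli(p1), independent of the iid censoring pairs with law M.\<close>
definition popM :: "real \<Rightarrow> (ennreal \<times> ennreal) measure \<Rightarrow> nat \<Rightarrow> outcome measure" where
  "popM p1 M n = PiM {..<n} (\<lambda>_. pair_measure (measure_pmf (bernoulli_pmf p1)) M)"

definition Zr :: "outcome \<Rightarrow> nat \<Rightarrow> bool" where
  "Zr \<omega> i = fst (\<omega> i)"

definition Cr :: "outcome \<Rightarrow> nat \<Rightarrow> ennreal" where
  "Cr \<omega> i = (if fst (\<omega> i) then fst (snd (\<omega> i)) else snd (snd (\<omega> i)))"

definition Wr :: "(nat \<Rightarrow> real) \<Rightarrow> outcome \<Rightarrow> nat \<Rightarrow> ennreal" where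
  "Wr T \<omega> i = min (ennreal (T i)) (Cr \<omega> i)"

definition Deltar :: "(nat \<Rightarrow> real) \<Rightarrow> outcome \<Rightarrow> nat \<Rightarrow> bool" where
  "Deltar T \<omega> i = (ennreal (T i) \<le> Cr \<omega> i)"

text \<open>Distinct event times t_1 < ... < t_K (k is 1-based).\<close>
definition Kn :: "nat \<Rightarrow> (nat \<Rightarrow> real) \<Rightarrow> nat" where
  "Kn n T = card (T ` {..<n})"

definition tk :: "nat \<Rightarrow> (nat \<Rightarrow> real) \<Rightarrow> nat \<Rightarrow> real" where
  "tk n T k = sorted_list_of_set (T ` {..<n}) ! (k - 1)"

definition dk :: "nat \<Rightarrow> (nat \<Rightarrow> real) \<Rightarrow> nat \<Rightarrow> nat" where
  "dk n T k = card {i\<in>{..<n}. T i = tk n T k}"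

definition nk :: "nat \<Rightarrow> (nat \<Rightarrow> real) \<Rightarrow> nat \<Rightarrow> nat" where
  "nk n T k = card {i\<in>{..<n}. tk n T k \<le> T i}"

definition hk :: "nat \<Rightarrow> (nat \<Rightarrow> real) \<Rightarrow> nat \<Rightarrow> real" where
  "hk n T k = real (dk n T k) / real (nk n T k)"

definition G1 :: "(ennreal \<times> ennreal) measure \<Rightarrow> real \<Rightarrow> real" where
  "G1 M c = measure M {x \<in> space M. ennreal c \<le> fst x}"

definition G0 :: "(ennreal \<times> ennreal) measure \<Rightarrow> real \<Rightarrow> real" where
  "G0 M c = measure M {x \<in> space M. ennreal c \<le> snd x}"

definition Gmix :: "real \<Rightarrow> (ennreal \<times> ennreal) measure \<Rightarrow> real \<Rightarrow> real" where
  "Gmix p1 M c = p1 * G1 M c + (1 - p1) * G0 M c"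

definition phik :: "real \<Rightarrow> (ennreal \<times> ennreal) measure \<Rightarrow> nat \<Rightarrow> (nat \<Rightarrow> real) \<Rightarrow> nat \<Rightarrow> real" where
  "phik p1 M n T k = p1 * G1 M (tk n T k) / Gmix p1 M (tk n T k)"

definition N1k :: "nat \<Rightarrow> (nat \<Rightarrow> real) \<Rightarrow> nat \<Rightarrow> outcome \<Rightarrow> nat" where
  "N1k n T k \<omega> = card {i\<in>{..<n}. Zr \<omega> i \<and> ennreal (tk n T k) \<le> Wr T \<omega> i}"

definition N0k :: "nat \<Rightarrow> (nat \<Rightarrow> real) \<Rightarrow> nat \<Rightarrow> outcome \<Rightarrow> nat" where
  "N0k n T k \<omega> = card {i\<in>{..<n}. \<not> Zr \<omega> i \<and> ennreal (tk n T k) \<le> Wr T \<omega> i}"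

definition Nk :: "nat \<Rightarrow> (nat \<Rightarrow> real) \<Rightarrow> nat \<Rightarrow> outcome \<Rightarrow> nat" where
  "Nk n T k \<omega> = N1k n T k \<omega> + N0k n T k \<omega>"

definition Dk :: "nat \<Rightarrow> (nat \<Rightarrow> real) \<Rightarrow> nat \<Rightarrow> outcome \<Rightarrow> nat" where
  "Dk n T k \<omega> = card {i\<in>{..<n}. Deltar T \<omega> i \<and> Wr T \<omega> i = ennreal (tk n T k)}"

text \<open>Real division by zero is 0 in Isabelle, matching the convention 0/0 := 0.\<close>
definition Vk :: "nat \<Rightarrow> (nat \<Rightarrow> real) \<Rightarrow> nat \<Rightarrow> outcome \<Rightarrow> real" where
  "Vk n T k \<omega> = real (Dk n T k \<omega>) * (real (Nk n T k \<omega>) - real (Dk n T k \<omega>))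
      * real (N1k n T k \<omega>) * real (N0k n T k \<omega>)
      / ((real (Nk n T k \<omega>))^2 * (real (Nk n T k \<omega>) - 1))"

definition xi4 :: "real \<Rightarrow> (ennreal \<times> ennreal) measure \<Rightarrow> nat \<Rightarrow> (nat \<Rightarrow> real) \<Rightarrow> nat \<Rightarrow> real" where
  "xi4 p1 M n T k =
     (\<integral>\<omega>. real (Dk n T k \<omega>) \<partial>popM p1 M n) * (1 - hk n T k)
       * phik p1 M n T k * (1 - phik p1 M n T k)
     - (\<integral>\<omega>. Vk n T k \<omega> \<partial>popM p1 M n)"

end

theory Submission
  imports Defs "HOL-Analysis.Harmonic_Numbers"
begin


lemma finite_set_Pi_pmf:
  fixes q :: "'b::finite pmf"
  assumes "finite I"
  shows "finite (set_pmf (Pi_pmf I dflt (\<lambda>_. q)))"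
proof -
  have "set_pmf (Pi_pmf I dflt (\<lambda>_. q)) \<subseteq> PiE_dflt I dflt (\<lambda>_. UNIV)"
    using set_Pi_pmf_subset[OF assms, of dflt "\<lambda>_. q"] by (auto simp: PiE_dflt_def)
  moreover have "finite (PiE_dflt I dflt (\<lambda>_. (UNIV :: 'b set)))"
    using assms by (intro finite_PiE_dflt) auto
  ultimately show ?thesis by (rule finite_subset)
qed

lemma integrable_Pi_pmf:
  fixes q :: "'b::finite pmf" and f :: "_ \<Rightarrow> real"
  assumes "finite I"
  shows "integrable (measure_pmf (Pi_pmf I dflt (\<lambda>_. q))) f"
  by (rule integrable_measure_pmf_finite[OF finite_set_Pi_pmf[OF assms]])

lemma L1:
  fixes q :: "'b::finite pmf" and G :: "_ \<Rightarrow> real"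
  assumes "finite I" "i \<in> I"
  shows "measure_pmf.expectation (Pi_pmf I dflt (\<lambda>_. q)) (\<lambda>x. (if x i = c then 1 else 0) * G x)
       = pmf q c * measure_pmf.expectation (Pi_pmf (I - {i}) dflt (\<lambda>_. q)) (\<lambda>f. G (f(i := c)))"
proof -
  let ?P' = "Pi_pmf (I - {i}) dflt (\<lambda>_. q)"
  have I: "I = insert i (I - {i})" using assms by auto
  have fin': "finite (I - {i})" using assms by auto
  have "Pi_pmf I dflt (\<lambda>_. q) = map_pmf (\<lambda>(y,f). f(i:=y)) (pair_pmf q ?P')"
    by (subst I, rule Pi_pmf_insert[OF fin']) auto
  hence "measure_pmf.expectation (Pi_pmf I dflt (\<lambda>_. q)) (\<lambda>x. (if x i = c then 1 else 0) * G x)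
     = measure_pmf.expectation (pair_pmf q ?P') (\<lambda>(y,f). (if y = c then 1 else 0) * G (f(i:=c)))"
    by (auto simp: case_prod_unfold intro!: Bochner_Integration.integral_cong)
  also have "\<dots> = (\<Sum>a\<in>UNIV \<times> set_pmf ?P'. (case a of (y,f) \<Rightarrow> (if y = c then 1 else 0) * G (f(i:=c))) * pmf (pair_pmf q ?P') a)"
    by (rule integral_measure_pmf_real) (auto intro!: finite_cartesian_product finite_set_Pi_pmf fin')
  also have "\<dots> = (\<Sum>y\<in>UNIV. \<Sum>f\<in>set_pmf ?P'. (if y = c then 1 else 0) * G (f(i:=c)) * (pmf q y * pmf ?P' f))"
    by (simp add: sum.cartesian_product case_prod_unfold, intro sum.cong refl, metis pmf_pair prod.collapse)
  also have "\<dots> = (\<Sum>y\<in>UNIV. if y = c then (\<Sum>f\<in>set_pmf ?P'. G (f(i:=c)) * (pmf q c * pmf ?P' f)) else 0)"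
    by (intro sum.cong refl) auto
  also have "\<dots> = (\<Sum>f\<in>set_pmf ?P'. G (f(i:=c)) * (pmf q c * pmf ?P' f))"
    by simp
  also have "\<dots> = pmf q c * (\<Sum>f\<in>set_pmf ?P'. G (f(i:=c)) * pmf ?P' f)"
    by (simp add: sum_distrib_left algebra_simps)
  also have "(\<Sum>f\<in>set_pmf ?P'. G (f(i:=c)) * pmf ?P' f) = measure_pmf.expectation ?P' (\<lambda>f. G (f(i := c)))"
    by (rule integral_measure_pmf_real[symmetric]) (auto intro!: finite_set_Pi_pmf fin')
  finally show ?thesis .
qed


definition EE :: "nat set \<Rightarrow> 'b \<Rightarrow> 'b pmf \<Rightarrow> ((nat \<Rightarrow> 'b) \<Rightarrow> real) \<Rightarrow> real" where
  "EE J d q f = measure_pmf.expectation (Pi_pmf J d (\<lambda>_. q)) f"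

definition ind :: "bool \<Rightarrow> real" where "ind P = (if P then 1 else 0)"

lemma ind_simps[simp]: "ind True = 1" "ind False = 0" "ind P * ind P = ind P" "0 \<le> ind P" "ind P \<le> 1"
  by (auto simp: ind_def)

context fixes q :: "'b::finite pmf" and d :: 'b
begin

lemma EE_add: "finite J \<Longrightarrow> EE J d q (\<lambda>x. f x + g x) = EE J d q f + EE J d q g"
  unfolding EE_def by (intro Bochner_Integration.integral_add integrable_Pi_pmf)

lemma EE_diff: "finite J \<Longrightarrow> EE J d q (\<lambda>x. f x - g x) = EE J d q f - EE J d q g"
  unfolding EE_def by (intro Bochner_Integration.integral_diff integrable_Pi_pmf)

lemma EE_sum: "finite J \<Longrightarrow> EE J d q (\<lambda>x. \<Sum>i\<in>A. f i x) = (\<Sum>i\<in>A. EE J d q (f i))"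
  unfolding EE_def by (intro Bochner_Integration.integral_sum integrable_Pi_pmf)

lemma EE_cmult: "EE J d q (\<lambda>x. c * f x) = c * EE J d q f"
  unfolding EE_def by simp

lemma EE_multc: "EE J d q (\<lambda>x. f x * c) = EE J d q f * c"
  unfolding EE_def by simp

lemma EE_const: "EE J d q (\<lambda>x. c) = c"
  unfolding EE_def by simp

lemma EE_mono: "finite J \<Longrightarrow> (\<And>x. f x \<le> g x) \<Longrightarrow> EE J d q f \<le> EE J d q g"
  unfolding EE_def by (intro integral_mono integrable_Pi_pmf) auto

lemma EE_nonneg: "(\<And>x. 0 \<le> f x) \<Longrightarrow> 0 \<le> EE J d q f"
  unfolding EE_def by (intro Bochner_Integration.integral_nonneg) auto

lemma EE_le1: "finite J \<Longrightarrow> (\<And>x. f x \<le> 1) \<Longrightarrow> EE J d q f \<le> 1"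
  using EE_mono[of J f "\<lambda>_. 1"] by (simp add: EE_const)

lemma L2:
  assumes "finite J" "i \<in> J" "j \<in> J" "i \<noteq> j"
  shows "EE J d q (\<lambda>x. ind (x i = c1) * ind (x j = c2) * G x)
       = pmf q c1 * pmf q c2 * EE (J - {i} - {j}) d q (\<lambda>f. G (f(j := c2, i := c1)))"
proof -
  have "EE J d q (\<lambda>x. ind (x i = c1) * ind (x j = c2) * G x)
      = EE J d q (\<lambda>x. (if x i = c1 then 1 else 0) * (ind (x j = c2) * G x))"
    by (simp add: ind_def mult.assoc)
  also have "\<dots> = pmf q c1 * EE (J - {i}) d q (\<lambda>f. ind (f j = c2) * G (f(i := c1)))"
    unfolding EE_def using assms by (subst L1) auto
  also have "EE (J - {i}) d q (\<lambda>f. ind (f j = c2) * G (f(i := c1)))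
      = EE (J - {i}) d q (\<lambda>f. (if f j = c2 then 1 else 0) * G (f(i := c1)))"
    by (simp add: ind_def)
  also have "\<dots> = pmf q c2 * EE (J - {i} - {j}) d q (\<lambda>f. G (f(j := c2, i := c1)))"
    unfolding EE_def using assms by (subst L1) auto
  finally show ?thesis by simp
qed

lemma L1':
  assumes "finite J" "i \<in> J"
  shows "EE J d q (\<lambda>x. ind (x i = c)) = pmf q c"
  using L1[OF assms, where q=q and dflt=d and c=c and G="\<lambda>_. 1"] by (simp add: EE_def ind_def)

end

definition sw :: "nat \<Rightarrow> nat \<Rightarrow> nat \<Rightarrow> nat" where
  "sw a b l = (if l = a then b else if l = b then a else l)"

lemma sw_sw[simp]: "sw a b (sw a b l) = l" by (auto simp: sw_def)

lemma bij_sw: "a \<in> J \<Longrightarrow> b \<in> J \<Longrightarrow> bij_betw (sw a b) J J"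
  by (rule bij_betwI[of _ _ _ "sw a b"]) (auto simp: sw_def)

lemma Sym:
  fixes q :: "'b::finite pmf"
  assumes "finite J" "a \<in> J" "b \<in> J"
  shows "EE J d q F = EE J d q (\<lambda>x. F (x \<circ> sw a b))"
proof -
  have "Pi_pmf J d (\<lambda>_. q) = map_pmf (\<lambda>g. g \<circ> sw a b) (Pi_pmf J d (\<lambda>_. q))"
    using assms by (intro Pi_pmf_bij_betw bij_sw) (auto simp: sw_def)
  hence "EE J d q F = measure_pmf.expectation (map_pmf (\<lambda>g. g \<circ> sw a b) (Pi_pmf J d (\<lambda>_. q))) F"
    unfolding EE_def by simp
  thus ?thesis unfolding EE_def by simp
qed

lemma card_sw:
  assumes "a \<in> U" "b \<in> U"
  shows "card {l\<in>U. P (sw a b l)} = card {l\<in>U. P l}"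
proof -
  have "{l\<in>U. P (sw a b l)} = sw a b ` {l\<in>U. P l}"
    using assms by (auto simp: sw_def image_iff split: if_splits)
  moreover have "inj (sw a b)" by (metis injI sw_sw)
  ultimately show ?thesis by (simp add: card_image inj_on_subset)
qed

lemma card_ind: "finite U \<Longrightarrow> real (card {i\<in>U. P i}) = (\<Sum>i\<in>U. ind (P i))"
  by (simp add: ind_def sum.If_cases Int_def conj_commute)


type_synonym ty = "nat \<Rightarrow> bool \<times> bool"

definition cR :: "nat set \<Rightarrow> ty \<Rightarrow> nat" where "cR A x = card {i\<in>A. snd (x i)}"
definition cN1 :: "nat set \<Rightarrow> ty \<Rightarrow> nat" where "cN1 A x = card {i\<in>A. fst (x i) \<and> snd (x i)}"
definition cN0 :: "nat set \<Rightarrow> ty \<Rightarrow> nat" where "cN0 A x = card {i\<in>A. \<not> fst (x i) \<and> snd (x i)}"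

definition cV :: "nat set \<Rightarrow> nat set \<Rightarrow> ty \<Rightarrow> real" where
  "cV S U x = real (cR S x) * (real (cN1 U x + cN0 U x) - real (cR S x)) * real (cN1 U x) * real (cN0 U x)
      / ((real (cN1 U x + cN0 U x))^2 * (real (cN1 U x + cN0 U x) - 1))"

definition Fr :: "nat set \<Rightarrow> nat set \<Rightarrow> ty \<Rightarrow> real" where
  "Fr S U x = real (cR S x) * (real (cR U x) - real (cR S x)) / ((real (cR U x))^2 * (real (cR U x) - 1))"

lemma cN10: "finite U \<Longrightarrow> cN1 U x + cN0 U x = cR U x"
  unfolding cN1_def cN0_def cR_def
  by (subst card_Un_disjoint[symmetric]) (auto intro: arg_cong[where f=card])

lemma cV_Fr: "finite U \<Longrightarrow> cV S U x = Fr S U x * real (cN1 U x) * real (cN0 U x)"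
  unfolding cV_def Fr_def by (simp add: cN10)

lemma cR_snd: "(\<And>l. snd (x l) = snd (y l)) \<Longrightarrow> cR A x = cR A y"
  unfolding cR_def by simp

lemma Fr_snd: "(\<And>l. snd (x l) = snd (y l)) \<Longrightarrow> Fr S U x = Fr S U y"
  unfolding Fr_def using cR_snd[of x y] by simp

lemma cR_mono: "finite U \<Longrightarrow> S \<subseteq> U \<Longrightarrow> cR S x \<le> cR U x"
  unfolding cR_def by (intro card_mono) auto

lemma cR_ind: "finite A \<Longrightarrow> real (cR A x) = (\<Sum>i\<in>A. ind (snd (x i)))"
  unfolding cR_def by (rule card_ind)

lemma pairs_count:
  assumes "finite U"
  shows "real (cR U x) * (real (cR U x) - 1) = (\<Sum>i\<in>U. \<Sum>j\<in>U-{i}. ind (snd (x i)) * ind (snd (x j)))"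
proof -
  have "(\<Sum>i\<in>U. \<Sum>j\<in>U-{i}. ind (snd (x i)) * ind (snd (x j)))
      = (\<Sum>i\<in>U. ind (snd (x i)) * (real (cR U x) - ind (snd (x i))))"
    using assms by (intro sum.cong refl) (simp add: sum_distrib_left[symmetric] cR_ind sum_diff1)
  also have "\<dots> = (\<Sum>i\<in>U. ind (snd (x i))) * real (cR U x) - (\<Sum>i\<in>U. ind (snd (x i)))"
    by (simp add: algebra_simps sum_distrib_left sum_subtractf sum_distrib_right)
  finally show ?thesis using assms by (simp add: cR_ind algebra_simps)
qed

lemma N1N0_sum:
  assumes "finite U"
  shows "real (cN1 U x) * real (cN0 U x) =
     (\<Sum>i\<in>U. \<Sum>j\<in>U-{i}. ind (x i = (True,True)) * ind (x j = (False,True)))"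
proof -
  have "real (cN1 U x) = (\<Sum>i\<in>U. ind (x i = (True,True)))"
    unfolding cN1_def using assms by (subst card_ind) (auto intro!: sum.cong simp: ind_def prod_eq_iff)
  moreover have "real (cN0 U x) = (\<Sum>i\<in>U. ind (x i = (False,True)))"
    unfolding cN0_def using assms by (subst card_ind) (auto intro!: sum.cong simp: ind_def prod_eq_iff)
  ultimately have "real (cN1 U x) * real (cN0 U x) =
     (\<Sum>i\<in>U. \<Sum>j\<in>U. ind (x i = (True,True)) * ind (x j = (False,True)))"
    by (simp add: sum_product)
  also have "\<dots> = (\<Sum>i\<in>U. \<Sum>j\<in>U-{i}. ind (x i = (True,True)) * ind (x j = (False,True)))"
  proof (rule sum.cong[OF refl])
    fix i assume "i \<in> U"
    hence "(\<Sum>j\<in>U. ind (x i = (True,True)) * ind (x j = (False,True)))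
      = ind (x i = (True,True)) * ind (x i = (False,True)) + (\<Sum>j\<in>U-{i}. ind (x i = (True,True)) * ind (x j = (False,True)))"
      using assms by (rule sum.remove[rotated])
    thus "(\<Sum>j\<in>U. ind (x i = (True,True)) * ind (x j = (False,True)))
      = (\<Sum>j\<in>U-{i}. ind (x i = (True,True)) * ind (x j = (False,True)))"
      by (auto simp: ind_def)
  qed
  finally show ?thesis .
qed

lemma ind_snd: "ind (snd v) = ind (v = (True,True)) + ind (v = (False,True))"
  by (cases v) (auto simp: ind_def)


context
  fixes q :: "(bool \<times> bool) pmf" and d :: "bool \<times> bool" and J S U :: "nat set"
  assumes finJ: "finite J" and UJ: "U \<subseteq> J"
begin

definition "KK i j = EE (J-{i}-{j}) d q (\<lambda>f. Fr S U (f(j:=(False,True), i:=(True,True))))"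

lemma finU: "finite U" using finJ UJ by (rule finite_subset[rotated])

lemma stepB1: "EE J d q (cV S U) = pmf q (True,True) * pmf q (False,True) * (\<Sum>i\<in>U. \<Sum>j\<in>U-{i}. KK i j)"
proof -
  have "EE J d q (cV S U) = EE J d q (\<lambda>x. \<Sum>i\<in>U. \<Sum>j\<in>U-{i}. ind (x i = (True,True)) * ind (x j = (False,True)) * Fr S U x)"
    unfolding EE_def using finU
    by (intro Bochner_Integration.integral_cong refl) (simp only: cV_Fr[OF finU] mult.assoc N1N0_sum[OF finU] sum_distrib_left, simp add: mult.commute mult.left_commute)
  also have "\<dots> = (\<Sum>i\<in>U. \<Sum>j\<in>U-{i}. EE J d q (\<lambda>x. ind (x i = (True,True)) * ind (x j = (False,True)) * Fr S U x))"
    using finJ by (simp add: EE_sum)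
  also have "\<dots> = (\<Sum>i\<in>U. \<Sum>j\<in>U-{i}. pmf q (True,True) * pmf q (False,True) * KK i j)"
    using UJ finJ by (intro sum.cong refl, subst L2) (auto simp: KK_def)
  finally show ?thesis by (simp add: sum_distrib_left)
qed

lemma pairB:
  assumes "i \<in> J" "j \<in> J" "i \<noteq> j"
  shows "EE J d q (\<lambda>x. ind (snd (x i)) * ind (snd (x j)) * Fr S U x) = (pmf q (True,True) + pmf q (False,True))^2 * KK i j"
proof -
  have eqf: "(\<lambda>f. Fr S U (f(j:=c2, i:=c1))) = (\<lambda>f. Fr S U (f(j:=(False,True), i:=(True,True))))"
    if "snd c1" "snd c2" for c1 c2
    using that by (intro ext Fr_snd) auto
  have L: "EE J d q (\<lambda>x. ind (x i = c1) * ind (x j = c2) * Fr S U x) = pmf q c1 * pmf q c2 * KK i j"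
    if "snd c1" "snd c2" for c1 c2
    by (simp only: L2[OF finJ assms] eqf[OF that] KK_def)
  have "EE J d q (\<lambda>x. ind (snd (x i)) * ind (snd (x j)) * Fr S U x) =
    EE J d q (\<lambda>x. (ind (x i = (True,True)) * ind (x j = (True,True)) * Fr S U x + ind (x i = (True,True)) * ind (x j = (False,True)) * Fr S U x)
       + (ind (x i = (False,True)) * ind (x j = (True,True)) * Fr S U x + ind (x i = (False,True)) * ind (x j = (False,True)) * Fr S U x))"
    unfolding EE_def by (intro Bochner_Integration.integral_cong refl) (simp only: ind_snd[of "x i" for x] ind_snd[of "x j" for x] distrib_left distrib_right add.assoc)
  also have "\<dots> = (pmf q (True,True) + pmf q (False,True))^2 * KK i j"
    using finJ by (simp only: EE_add L[of "(True,True)" "(True,True)", simplified] L[of "(True,True)" "(False,True)", simplified]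
      L[of "(False,True)" "(True,True)", simplified] L[of "(False,True)" "(False,True)", simplified]) (simp add: power2_eq_square algebra_simps)
  finally show ?thesis .
qed

lemma stepB2: "EE J d q (\<lambda>x. Fr S U x * (real (cR U x) * (real (cR U x) - 1))) =
   (pmf q (True,True) + pmf q (False,True))^2 * (\<Sum>i\<in>U. \<Sum>j\<in>U-{i}. KK i j)"
proof -
  have "EE J d q (\<lambda>x. Fr S U x * (real (cR U x) * (real (cR U x) - 1))) =
     EE J d q (\<lambda>x. \<Sum>i\<in>U. \<Sum>j\<in>U-{i}. ind (snd (x i)) * ind (snd (x j)) * Fr S U x)"
    unfolding EE_def using finU
    by (intro Bochner_Integration.integral_cong refl) (simp add: pairs_count sum_distrib_left mult.commute mult.left_commute)
  also have "\<dots> = (\<Sum>i\<in>U. \<Sum>j\<in>U-{i}. EE J d q (\<lambda>x. ind (snd (x i)) * ind (snd (x j)) * Fr S U x))"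
    using finJ by (simp add: EE_sum)
  also have "\<dots> = (\<Sum>i\<in>U. \<Sum>j\<in>U-{i}. (pmf q (True,True) + pmf q (False,True))^2 * KK i j)"
    using UJ by (intro sum.cong refl pairB) auto
  finally show ?thesis by (simp add: sum_distrib_left)
qed

end


lemma arith_core:
  fixes p0 g c1 T2 X d u :: real
  assumes a1: "0 \<le> p0" and a2: "p0 \<le> 1" and a3: "0 \<le> g" and a4: "g \<le> 1" and a5: "1 \<le> d" and a6: "d \<le> u"
    and a7: "u * c1 = p0" and a8: "T2 = d * c1 + X" and a9: "(u - 1) * X = d * (d - 1) * (g - c1)"
    and a10: "d = 1 \<Longrightarrow> X = 0"
  shows "\<bar>T2 - d / u * d * g\<bar> \<le> d / u"
proof -
  have pg: "\<bar>p0 - g\<bar> \<le> 1" using a1 a2 a3 a4 by linarith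
  show ?thesis
  proof (cases "d = 1")
    case True
    hence X0: "X = 0" by (rule a10)
    show ?thesis
    proof (cases "u = 1")
      case True
      thus ?thesis using a7 a8 X0 \<open>d = 1\<close> pg by simp
    next
      case False
      hence "u > 1" using a5 a6 by linarith
      have c1: "c1 = p0 / u" using a7 \<open>u > 1\<close> by (simp add: field_simps)
      have e: "T2 - d / u * d * g = (p0 - g) / u" using c1 X0 \<open>d = 1\<close> a8
        by (simp add: diff_divide_distrib)
      have "\<bar>(p0 - g) / u\<bar> = \<bar>p0 - g\<bar> / u" using \<open>u > 1\<close> by simp
      also have "\<dots> \<le> 1 / u" using \<open>u > 1\<close> pg by (intro divide_right_mono) auto
      finally show ?thesis using \<open>d = 1\<close> e by simp
    qed
  next
    case False
    hence "u > 1" using a5 a6 by linarith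
    have c1: "c1 = p0 / u" using a7 \<open>u > 1\<close> by (simp add: field_simps)
    have X: "X = d * (d - 1) * (g - c1) / (u - 1)" using a9 \<open>u > 1\<close> by (simp add: field_simps)
    have eq: "T2 - d / u * d * g = (d / u) * ((u - d) / (u - 1)) * (p0 - g)"
      unfolding a8 X c1 using \<open>u > 1\<close> by (simp add: field_simps)
    have f1: "0 \<le> (u - d) / (u - 1)" "(u - d) / (u - 1) \<le> 1" using a5 a6 \<open>u > 1\<close> by auto
    have "\<bar>((u - d) / (u - 1)) * (p0 - g)\<bar> = ((u - d) / (u - 1)) * \<bar>p0 - g\<bar>"
      using f1 by (simp only: abs_mult)
    also have "\<dots> \<le> 1" using f1 pg by (intro mult_le_one) auto
    finally have h1: "\<bar>((u - d) / (u - 1)) * (p0 - g)\<bar> \<le> 1" .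
    have h2: "0 \<le> d / u" using a5 a6 by auto
    have "\<bar>(d / u) * (((u - d) / (u - 1)) * (p0 - g))\<bar> = (d / u) * \<bar>((u - d) / (u - 1)) * (p0 - g)\<bar>"
      using h2 by (simp only: abs_mult)
    also have "\<dots> \<le> d / u" using h1 h2 by (rule mult_left_le)
    finally have "\<bar>(d / u) * (((u - d) / (u - 1)) * (p0 - g))\<bar> \<le> d / u" .
    thus ?thesis using eq by (simp add: mult.assoc)
  qed
qed


context
  fixes q :: "(bool \<times> bool) pmf" and d :: "bool \<times> bool" and J S U :: "nat set"
  assumes finJ: "finite J" and UJ: "U \<subseteq> J" and SU: "S \<subseteq> U"
begin

lemma finU': "finite U" using finJ UJ by (rule finite_subset[rotated])
lemma finS': "finite S" using finU' SU by (rule finite_subset[rotated])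

definition "invN x = 1 / real (cR U x)"
definition "e1 i = EE J d q (\<lambda>x. ind (snd (x i)) * invN x)"
definition "e2 i j = EE J d q (\<lambda>x. ind (snd (x i)) * ind (snd (x j)) * invN x)"

lemma invN_sw: "a \<in> U \<Longrightarrow> b \<in> U \<Longrightarrow> invN (x \<circ> sw a b) = invN x"
  unfolding invN_def cR_def using card_sw[of a U b "\<lambda>l. snd (x l)"] by simp

lemma e1_eq: "i \<in> U \<Longrightarrow> i' \<in> U \<Longrightarrow> e1 i = e1 i'"
  unfolding e1_def using UJ
  by (subst Sym[OF finJ, of i i']) (auto simp: invN_sw sw_def)

lemma e2_eq: "i \<in> U \<Longrightarrow> j \<in> U - {i} \<Longrightarrow> j' \<in> U - {i} \<Longrightarrow> e2 i j = e2 i j'"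
  unfolding e2_def using UJ
  by (subst Sym[OF finJ, of j j']) (auto simp: invN_sw sw_def)

lemma e2_comm: "e2 i j = e2 j i"
  unfolding e2_def by (simp add: mult.commute mult.left_commute)

lemma e2_diag: "e2 i i = e1 i"
  unfolding e2_def e1_def by (simp add: mult.assoc[symmetric])

lemma EE_r: "i \<in> J \<Longrightarrow> EE J d q (\<lambda>x. ind (snd (x i))) = pmf q (True,True) + pmf q (False,True)"
  using finJ by (simp add: ind_snd EE_add L1')

lemma sum_e1: "0 \<le> (\<Sum>i\<in>U. e1 i) \<and> (\<Sum>i\<in>U. e1 i) \<le> 1"
proof -
  have "(\<Sum>i\<in>U. e1 i) = EE J d q (\<lambda>x. real (cR U x) * invN x)"
    unfolding e1_def using finJ finU' by (simp add: EE_sum[symmetric] cR_ind sum_distrib_right)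
  moreover have "0 \<le> real (cR U x) * invN x \<and> real (cR U x) * invN x \<le> 1" for x
    by (auto simp: invN_def)
  ultimately show ?thesis using finJ by (auto intro!: EE_nonneg EE_le1)
qed

lemma sum_e2: "i \<in> U \<Longrightarrow> (\<Sum>j\<in>U. e2 i j) = pmf q (True,True) + pmf q (False,True)"
proof -
  assume i: "i \<in> U"
  have "(\<Sum>j\<in>U. e2 i j) = EE J d q (\<lambda>x. ind (snd (x i)) * real (cR U x) * invN x)"
    unfolding e2_def using finJ finU' by (simp add: EE_sum[symmetric] cR_ind sum_distrib_right sum_distrib_left mult.assoc)
  also have "\<dots> = EE J d q (\<lambda>x. ind (snd (x i)))"
  proof -
    have h: "ind (snd (x i)) * real (cR U x) * invN x = ind (snd (x i))" for x
    proof (cases "snd (x i)")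
      case True
      hence "cR U x > 0" unfolding cR_def using i finU' by (auto simp: card_gt_0_iff)
      thus ?thesis using True by (simp add: invN_def)
    qed simp
    show ?thesis by (simp only: h)
  qed
  also have "\<dots> = pmf q (True,True) + pmf q (False,True)" using i UJ by (intro EE_r) auto
  finally show ?thesis .
qed

lemma ED: "EE J d q (\<lambda>x. real (cR S x)) = real (card S) * (pmf q (True,True) + pmf q (False,True))"
  using finJ finS' SU UJ by (simp add: cR_ind EE_sum EE_r subset_iff)

lemma ED2: "EE J d q (\<lambda>x. (real (cR S x))^2 * invN x) = (\<Sum>i\<in>S. \<Sum>j\<in>S. e2 j i)"
  unfolding e2_def using finJ finS'
  by (simp add: EE_sum[symmetric] cR_ind power2_eq_square sum_distrib_left sum_distrib_right)

lemma pw: "Fr S U x * (real (cR U x) * (real (cR U x) - 1)) = real (cR S x) - (real (cR S x))^2 * invN x"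
proof -
  have le: "cR S x \<le> cR U x" using cR_mono[OF finU' SU] .
  consider "cR U x = 0" | "cR U x = 1" | "cR U x \<ge> 2" by linarith
  thus ?thesis
  proof cases
    case 1 thus ?thesis using le by (simp add: invN_def)
  next
    case 2
    hence "cR S x = 0 \<or> cR S x = 1" using le by linarith
    thus ?thesis using 2 by (auto simp: invN_def)
  next
    case 3
    hence "real (cR U x) \<ge> 2" by simp
    thus ?thesis unfolding Fr_def invN_def by (simp add: field_simps power2_eq_square)
  qed
qed

lemma g_le1: "pmf q (True,True) + pmf q (False,True) \<le> 1"
proof -
  have "pmf q (True,True) + pmf q (False,True) = measure_pmf.prob q {(True,True),(False,True)}"
    by (simp add: measure_measure_pmf_finite)
  also have "\<dots> \<le> 1" by simp
  finally show ?thesis .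
qed

lemma core:
  assumes Sne: "S \<noteq> {}"
  defines "a \<equiv> pmf q (True,True)" and "b \<equiv> pmf q (False,True)"
  defines "\<phi> \<equiv> a / (a + b)"
  shows "\<bar>EE J d q (\<lambda>x. real (cR S x)) * (1 - real (card S) / real (card U)) * \<phi> * (1 - \<phi>)
           - EE J d q (cV S U)\<bar> \<le> real (card S) / real (card U)"
proof -
  define g where "g = a + b"
  define D where "D = real (card S)"
  define u where "u = real (card U)"
  define T2 where "T2 = EE J d q (\<lambda>x. (real (cR S x))^2 * invN x)"
  have a0: "0 \<le> a" and b0: "0 \<le> b" unfolding a_def b_def by auto
  have g1: "g \<le> 1" unfolding g_def a_def b_def by (rule g_le1)
  have ED': "EE J d q (\<lambda>x. real (cR S x)) = D * g" unfolding D_def g_def a_def b_def by (rule ED)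
  have EFr: "EE J d q (\<lambda>x. Fr S U x * (real (cR U x) * (real (cR U x) - 1))) = D * g - T2"
    unfolding pw T2_def using finJ by (simp add: EE_diff ED')
  have B1: "EE J d q (cV S U) = a * b * (\<Sum>i\<in>U. \<Sum>j\<in>U-{i}. KK q d J S U i j)"
    unfolding a_def b_def by (rule stepB1[OF finJ UJ])
  have B2: "EE J d q (\<lambda>x. Fr S U x * (real (cR U x) * (real (cR U x) - 1))) = g^2 * (\<Sum>i\<in>U. \<Sum>j\<in>U-{i}. KK q d J S U i j)"
    unfolding a_def b_def g_def by (rule stepB2[OF finJ UJ])
  have EV: "EE J d q (cV S U) = \<phi> * (1 - \<phi>) * (D * g - T2)"
  proof (cases "g = 0")
    case True
    hence "a = 0" using a0 b0 unfolding g_def by linarith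
    thus ?thesis unfolding B1 \<phi>_def by simp
  next
    case False
    hence gp: "g > 0" using a0 b0 unfolding g_def by linarith
    have hphi: "\<phi> * (1 - \<phi>) = a * b / g^2" unfolding \<phi>_def g_def[symmetric] using gp
      by (simp add: field_simps power2_eq_square g_def)
    have "\<phi> * (1 - \<phi>) * (g^2 * (\<Sum>i\<in>U. \<Sum>j\<in>U-{i}. KK q d J S U i j)) = a * b / g^2 * g^2 * (\<Sum>i\<in>U. \<Sum>j\<in>U-{i}. KK q d J S U i j)"
      unfolding hphi by simp
    also have "\<dots> = a * b * (\<Sum>i\<in>U. \<Sum>j\<in>U-{i}. KK q d J S U i j)" using gp by simp
    finally show ?thesis unfolding EFr[symmetric] B2 B1 by (simp only: mult.assoc)
  qed
  obtain i0 where i0: "i0 \<in> S" using Sne by auto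
  define c1 where "c1 = e1 i0"
  have e1c: "e1 i = c1" if "i \<in> U" for i unfolding c1_def using that i0 SU by (intro e1_eq) auto
  define X where "X = (\<Sum>i\<in>S. \<Sum>j\<in>S-{i}. e2 j i)"
  have T2X: "T2 = D * c1 + X"
  proof -
    have "T2 = (\<Sum>i\<in>S. e2 i i + (\<Sum>j\<in>S-{i}. e2 j i))"
      unfolding T2_def ED2 using finS' by (intro sum.cong refl) (simp add: sum.remove)
    also have "\<dots> = (\<Sum>i\<in>S. c1 + (\<Sum>j\<in>S-{i}. e2 j i))"
      using SU by (intro sum.cong refl) (auto simp: e2_diag e1c)
    finally show ?thesis unfolding X_def D_def by (simp add: sum.distrib)
  qed
  have uc1: "u * c1 = (\<Sum>i\<in>U. e1 i)" unfolding u_def using e1c by simp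
  have p0: "0 \<le> u * c1" "u * c1 \<le> 1" using sum_e1 uc1 by auto
  have rowX: "(u - 1) * (\<Sum>j\<in>S-{i}. e2 j i) = (D - 1) * (g - c1)" if i: "i \<in> S" for i
  proof (cases "U - {i} = {}")
    case True
    hence "S - {i} = {}" using SU by auto
    moreover have "S = {i}" using \<open>S - {i} = {}\<close> i by auto
    moreover have "U = {i}" using True i SU by auto
    ultimately show ?thesis unfolding D_def u_def by simp
  next
    case False
    then obtain j0 where j0: "j0 \<in> U - {i}" by auto
    have iU: "i \<in> U" using i SU by auto
    have eq: "e2 i j = e2 i j0" if "j \<in> U - {i}" for j using e2_eq[OF iU that j0] .
    have "g = (\<Sum>j\<in>U. e2 i j)" unfolding g_def a_def b_def using sum_e2[OF iU] by simp
    also have "\<dots> = e2 i i + (\<Sum>j\<in>U-{i}. e2 i j)" using finU' iU by (simp add: sum.remove)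
    also have "\<dots> = c1 + (u - 1) * e2 i j0"
    proof -
      have "(\<Sum>j\<in>U-{i}. e2 i j) = (\<Sum>j\<in>U-{i}. e2 i j0)" using eq by (intro sum.cong refl)
      also have "\<dots> = real (card (U - {i})) * e2 i j0" by simp
      also have "real (card (U - {i})) = u - 1"
      proof -
        have "0 < card U" using finU' iU card_gt_0_iff by blast
        thus ?thesis unfolding u_def by (simp add: card_Diff_singleton[OF iU] of_nat_diff)
      qed
      finally show ?thesis using e2_diag e1c[OF iU] by simp
    qed
    finally have A: "(u - 1) * e2 i j0 = g - c1" by simp
    have "(\<Sum>j\<in>S-{i}. e2 j i) = (\<Sum>j\<in>S-{i}. e2 i j0)"
    proof (intro sum.cong refl)
      fix j assume "j \<in> S - {i}"
      hence "j \<in> U - {i}" using SU by auto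
      thus "e2 j i = e2 i j0" using eq e2_comm by metis
    qed
    also have "\<dots> = real (card (S - {i})) * e2 i j0" by simp
    also have "real (card (S - {i})) = D - 1"
    proof -
      have "0 < card S" using finS' i card_gt_0_iff by blast
      thus ?thesis unfolding D_def by (simp add: card_Diff_singleton[OF i] of_nat_diff)
    qed
    finally have B: "(\<Sum>j\<in>S-{i}. e2 j i) = (D - 1) * e2 i j0" .
    have "(u - 1) * (\<Sum>j\<in>S-{i}. e2 j i) = (D - 1) * ((u - 1) * e2 i j0)" unfolding B by simp
    thus ?thesis unfolding A .
  qed
  have uX: "(u - 1) * X = D * (D - 1) * (g - c1)"
    unfolding X_def using rowX by (simp add: sum_distrib_left D_def)
  have X0: "D = 1 \<Longrightarrow> X = 0"
  proof -
    assume "D = 1"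
    hence "card S = 1" unfolding D_def by simp
    then obtain s where "S = {s}" by (auto simp: card_Suc_eq)
    thus "X = 0" unfolding X_def by simp
  qed
  have D1: "1 \<le> D" unfolding D_def using Sne finS' by (simp add: Suc_le_eq card_gt_0_iff)
  have Du: "D \<le> u" unfolding D_def u_def using SU finU' by (simp add: card_mono)
  have main: "\<bar>T2 - D / u * D * g\<bar> \<le> D / u"
    by (rule arith_core[OF p0(1) p0(2) _ g1 D1 Du refl T2X uX X0]) (use a0 b0 g_def in auto)
  have phi: "0 \<le> \<phi> * (1 - \<phi>)" "\<phi> * (1 - \<phi>) \<le> 1"
  proof -
    have "0 \<le> \<phi>" "\<phi> \<le> 1" unfolding \<phi>_def using a0 b0 by (auto simp: divide_le_eq_1)
    thus "0 \<le> \<phi> * (1 - \<phi>)" "\<phi> * (1 - \<phi>) \<le> 1" by (auto simp: mult_le_one)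
  qed
  have "EE J d q (\<lambda>x. real (cR S x)) * (1 - D / u) * \<phi> * (1 - \<phi>) - EE J d q (cV S U)
      = \<phi> * (1 - \<phi>) * (T2 - D / u * D * g)"
    unfolding ED' EV by (simp add: algebra_simps)
  hence "\<bar>EE J d q (\<lambda>x. real (cR S x)) * (1 - D / u) * \<phi> * (1 - \<phi>) - EE J d q (cV S U)\<bar>
      = \<phi> * (1 - \<phi>) * \<bar>T2 - D / u * D * g\<bar>" by (simp only: abs_mult[of "\<phi> * (1 - \<phi>)"] abs_of_nonneg[OF phi(1)])
  also have "\<dots> \<le> 1 * (D / u)" using phi main by (intro mult_mono) auto
  finally show ?thesis unfolding D_def u_def by simp
qed

end


definition qq :: "real \<Rightarrow> (ennreal \<times> ennreal) measure \<Rightarrow> real \<Rightarrow> (bool \<times> bool) pmf" where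
  "qq p1 M t = bind_pmf (bernoulli_pmf p1) (\<lambda>z. map_pmf (\<lambda>r. (z, r)) (bernoulli_pmf (if z then G1 M t else G0 M t)))"

definition rho :: "real \<Rightarrow> bool \<times> (ennreal \<times> ennreal) \<Rightarrow> bool \<times> bool" where
  "rho t w = (fst w, ennreal t \<le> (if fst w then fst (snd w) else snd (snd w)))"

lemma pmf_qq:
  assumes "0 \<le> p1" "p1 \<le> 1" "0 \<le> g1" "g1 \<le> 1" "0 \<le> g0" "g0 \<le> 1"
  shows "pmf (bind_pmf (bernoulli_pmf p1) (\<lambda>z. map_pmf (\<lambda>r. (z, r)) (bernoulli_pmf (if z then g1 else g0)))) (z, r)
     = (if z then p1 else 1 - p1) * (if z then (if r then g1 else 1 - g1) else (if r then g0 else 1 - g0))"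
proof -
  have pm: "pmf (map_pmf (Pair z') B) (z, r) = (if z' = z then pmf B r else 0)" for z' B z r
  proof (cases "z' = z")
    case True
    have "inj (Pair z')" by (auto intro: injI)
    thus ?thesis using True pmf_map_inj'[of "Pair z'" B r] by simp
  next
    case False
    thus ?thesis by (subst pmf_map) (auto simp: measure_pmf.prob_eq_0 AE_measure_pmf_iff vimage_def)
  qed
  show ?thesis using assms
    by (cases z; cases r) (simp_all add: pmf_bind pm)
qed

context
  fixes p1 :: real and M :: "(ennreal \<times> ennreal) measure" and t :: real
  assumes p1: "0 < p1" "p1 < 1" and PM: "prob_space M" and SM: "sets M = sets borel"
begin

interpretation M: prob_space M by (rule PM)

abbreviation "mu \<equiv> pair_measure (measure_pmf (bernoulli_pmf p1)) M"

lemma G1_bounds: "0 \<le> G1 M c" "G1 M c \<le> 1" unfolding G1_def by auto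
lemma G0_bounds: "0 \<le> G0 M c" "G0 M c \<le> 1" unfolding G0_def by auto

lemma fst_meas[measurable]: "(\<lambda>y. fst y) \<in> borel_measurable M"
  using borel_measurable_continuous_onI[OF continuous_on_fst[OF continuous_on_id]]
  by (simp add: measurable_cong_sets[OF SM refl])
lemma snd_meas[measurable]: "(\<lambda>y. snd y) \<in> borel_measurable M"
  using borel_measurable_continuous_onI[OF continuous_on_snd[OF continuous_on_id]]
  by (simp add: measurable_cong_sets[OF SM refl])

lemma pred_set: "{y \<in> space M. P (ennreal t \<le> (if z then fst y else snd y))} \<in> sets M"
  by measurable

lemma rho_meas: "rho t \<in> measurable mu (measure_pmf (qq p1 M t))"
proof -
  have "rho t \<in> measurable mu (count_space UNIV)"
    unfolding rho_def by measurable
  thus ?thesis by (simp add: measurable_cong_sets)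
qed

lemma emeasure_B:
  "emeasure M {y \<in> space M. (ennreal t \<le> (if z then fst y else snd y)) = r}
    = ennreal (if r then (if z then G1 M t else G0 M t) else 1 - (if z then G1 M t else G0 M t))"
proof -
  define A where "A = {y \<in> space M. ennreal t \<le> (if z then fst y else snd y)}"
  have A: "A \<in> sets M" unfolding A_def using pred_set[of "\<lambda>x. x" z] by simp
  have mA: "measure M A = (if z then G1 M t else G0 M t)" unfolding A_def G1_def G0_def by (cases z) auto
  show ?thesis
  proof (cases r)
    case True
    thus ?thesis using mA by (simp add: M.emeasure_eq_measure A_def)
  next
    case False
    have "{y \<in> space M. (ennreal t \<le> (if z then fst y else snd y)) = r} = space M - A"
      using False unfolding A_def by auto
    thus ?thesis using False mA M.prob_compl[OF A] by (simp add: M.emeasure_eq_measure)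
  qed
qed

lemma distr_rho: "distr mu (measure_pmf (qq p1 M t)) (rho t) = measure_pmf (qq p1 M t)"
proof (rule measure_eqI_finite[where A=UNIV])
  show "sets (distr mu (measure_pmf (qq p1 M t)) (rho t)) = Pow UNIV" by simp
  show "sets (measure_pmf (qq p1 M t)) = Pow UNIV" by simp
  show "finite (UNIV :: (bool \<times> bool) set)" by simp
  fix c :: "bool \<times> bool"
  obtain z r where c: "c = (z, r)" by (cases c)
  have pre: "rho t -` {c} \<inter> space mu = {z} \<times> {y \<in> space M. (ennreal t \<le> (if z then fst y else snd y)) = r}"
  proof (rule set_eqI)
    fix w :: "bool \<times> ennreal \<times> ennreal"
    obtain z' y where w: "w = (z', y)" by (cases w)
    show "w \<in> rho t -` {c} \<inter> space mu \<longleftrightarrow> w \<in> {z} \<times> {y \<in> space M. (ennreal t \<le> (if z then fst y else snd y)) = r}"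
      unfolding w c rho_def space_pair_measure by (cases "z' = z") auto
  qed
  have sf: "sigma_finite_measure M" by (rule M.sigma_finite_measure_axioms)
  have Bm: "{y \<in> space M. (ennreal t \<le> (if z then fst y else snd y)) = r} \<in> sets M"
    using pred_set[of "\<lambda>x. x = r" z] by simp
  have "emeasure (distr mu (measure_pmf (qq p1 M t)) (rho t)) {c} = emeasure mu (rho t -` {c} \<inter> space mu)"
    by (rule emeasure_distr[OF rho_meas]) simp
  also have "\<dots> = emeasure (measure_pmf (bernoulli_pmf p1)) {z} * emeasure M {y \<in> space M. (ennreal t \<le> (if z then fst y else snd y)) = r}"
    unfolding pre by (rule sigma_finite_measure.emeasure_pair_measure_Times[OF sf _ Bm]) simp
  also have "\<dots> = ennreal (if z then p1 else 1 - p1) * ennreal (if r then (if z then G1 M t else G0 M t) else 1 - (if z then G1 M t else G0 M t))"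
    unfolding emeasure_B using p1 by (simp add: emeasure_pmf_single)
  also have "\<dots> = ennreal ((if z then p1 else 1 - p1) * (if r then (if z then G1 M t else G0 M t) else 1 - (if z then G1 M t else G0 M t)))"
    using p1 G1_bounds G0_bounds by (subst ennreal_mult[symmetric]) auto
  also have "\<dots> = emeasure (measure_pmf (qq p1 M t)) {c}"
    unfolding c qq_def using p1 G1_bounds G0_bounds
    by (subst emeasure_pmf_single, subst pmf_qq) (auto intro!: arg_cong[where f=ennreal])
  finally show "emeasure (distr mu (measure_pmf (qq p1 M t)) (rho t)) {c} = emeasure (measure_pmf (qq p1 M t)) {c}" .
qed

lemma pmf_qq_TT: "pmf (qq p1 M t) (True,True) = p1 * G1 M t"
  unfolding qq_def using p1 G1_bounds G0_bounds by (subst pmf_qq) auto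
lemma pmf_qq_FT: "pmf (qq p1 M t) (False,True) = (1 - p1) * G0 M t"
  unfolding qq_def using p1 G1_bounds G0_bounds by (subst pmf_qq) auto

end

lemma sets_PiM_pmf:
  fixes q :: "'b::finite pmf"
  assumes "finite I"
  shows "sets (PiM I (\<lambda>_. measure_pmf q)) = Pow (PiE I (\<lambda>_. UNIV))"
proof
  show "sets (PiM I (\<lambda>_. measure_pmf q)) \<subseteq> Pow (PiE I (\<lambda>_. UNIV))"
    using sets.sets_into_space[of _ "PiM I (\<lambda>_. measure_pmf q)"] by (auto simp: space_PiM)
  show "Pow (PiE I (\<lambda>_. UNIV)) \<subseteq> sets (PiM I (\<lambda>_. measure_pmf q))"
  proof
    fix A assume A: "A \<in> Pow (PiE I (\<lambda>_. (UNIV :: 'b set)))"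
    have fin: "finite (PiE I (\<lambda>_. (UNIV :: 'b set)))" using assms by (intro finite_PiE) auto
    have "countable A" using A fin by (auto intro: countable_finite finite_subset)
    moreover have single: "{a} \<in> sets (PiM I (\<lambda>_. measure_pmf q))" if "a \<in> A" for a
    proof -
      have "a \<in> extensional I" using A that by (auto simp: PiE_def)
      hence "{a} = PiE I (\<lambda>i. {a i})" by (simp add: PiE_singleton)
      also have "\<dots> \<in> sets (PiM I (\<lambda>_. measure_pmf q))" using assms by (intro sets_PiM_I_finite) auto
      finally show ?thesis .
    qed
    ultimately show "A \<in> sets (PiM I (\<lambda>_. measure_pmf q))" by (metis sets.countable)
  qed
qed

lemma meas_PiM_pmf:
  fixes q :: "'b::finite pmf" and \<Phi> :: "(nat \<Rightarrow> 'b) \<Rightarrow> real"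
  assumes "finite I"
  shows "\<Phi> \<in> borel_measurable (PiM I (\<lambda>_. measure_pmf q))"
proof -
  have "\<Phi> \<in> borel_measurable (count_space (PiE I (\<lambda>_. UNIV)))" by simp
  moreover have "sets (count_space (PiE I (\<lambda>_. (UNIV :: 'b set)))) = sets (PiM I (\<lambda>_. measure_pmf q))"
    using sets_PiM_pmf[OF assms, of q] by simp
  ultimately show ?thesis using measurable_cong_sets by blast
qed

lemma distr_Pi_pmf_PiM:
  fixes q :: "'b::finite pmf"
  assumes fin: "finite I"
  shows "distr (measure_pmf (Pi_pmf I dflt (\<lambda>_. q))) (PiM I (\<lambda>_. measure_pmf q)) (\<lambda>x. restrict x I) = PiM I (\<lambda>_. measure_pmf q)"
proof -
  interpret product_prob_space "\<lambda>_. measure_pmf q"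
    by (intro product_prob_spaceI) (simp add: measure_pmf.prob_space_axioms)
  show ?thesis
  proof (rule PiM_eqI[OF fin])
    show "sets (distr (measure_pmf (Pi_pmf I dflt (\<lambda>_. q))) (PiM I (\<lambda>_. measure_pmf q)) (\<lambda>x. restrict x I)) = sets (PiM I (\<lambda>_. measure_pmf q))"
      by simp
  next
    fix A assume A: "\<And>i. i \<in> I \<Longrightarrow> A i \<in> sets (measure_pmf q)"
    have "Pi\<^sub>E I A \<in> sets (Pi\<^sub>M I (\<lambda>_. measure_pmf q))" using A fin by (intro sets_PiM_I_finite) auto
    hence "emeasure (distr (measure_pmf (Pi_pmf I dflt (\<lambda>_. q))) (Pi\<^sub>M I (\<lambda>_. measure_pmf q)) (\<lambda>x. restrict x I)) (Pi\<^sub>E I A)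
       = emeasure (measure_pmf (Pi_pmf I dflt (\<lambda>_. q))) ((\<lambda>x. restrict x I) -` Pi\<^sub>E I A)"
      by (subst emeasure_distr) (auto simp: space_PiM)
    also have "\<dots> = emeasure (measure_pmf (Pi_pmf I dflt (\<lambda>_. q))) (PiE_dflt I dflt A)"
      by (intro emeasure_eq_AE AE_pmfI) (auto simp: PiE_dflt_def set_Pi_pmf fin)
    also have "\<dots> = (\<Prod>i\<in>I. emeasure (measure_pmf q) (A i))"
      by (simp add: measure_pmf.emeasure_eq_measure measure_Pi_pmf_PiE_dflt fin prod_ennreal)
    finally show "emeasure (distr (measure_pmf (Pi_pmf I dflt (\<lambda>_. q))) (Pi\<^sub>M I (\<lambda>_. measure_pmf q)) (\<lambda>x. restrict x I)) (Pi\<^sub>E I A)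
       = (\<Prod>i\<in>I. emeasure (measure_pmf q) (A i))" .
  qed
qed

lemma integral_bridge:
  fixes q :: "'b::finite pmf" and \<Phi> :: "(nat \<Rightarrow> 'b) \<Rightarrow> real"
  assumes fin: "finite I" and PS: "prob_space mu0" and rm: "\<rho> \<in> measurable mu0 (measure_pmf q)"
    and dr: "distr mu0 (measure_pmf q) \<rho> = measure_pmf q"
  shows "(\<integral>\<omega>. \<Phi> (compose I \<rho> \<omega>) \<partial>PiM I (\<lambda>_. mu0)) = EE I dflt q (\<lambda>x. \<Phi> (restrict x I))"
proof -
  let ?N = "PiM I (\<lambda>_. measure_pmf q)"
  have cm: "compose I \<rho> \<in> measurable (PiM I (\<lambda>_. mu0)) ?N"
    unfolding compose_def
    by (intro measurable_restrict, rule measurable_compose[OF measurable_component_singleton[of _ I "\<lambda>_. mu0"] rm])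
  have rm2: "\<rho> \<in> mu0 \<rightarrow>\<^sub>M count_space UNIV" using rm by (simp add: measurable_cong_sets)
  have d1: "distr (PiM I (\<lambda>_. mu0)) ?N (compose I \<rho>) = ?N"
    by (subst distr_PiM_finite_prob_space'[OF fin]) (auto simp: PS measure_pmf.prob_space_axioms rm rm2 dr)
  have rmeas: "(\<lambda>x. restrict x I) \<in> measurable (measure_pmf (Pi_pmf I dflt (\<lambda>_. q))) ?N"
  proof -
    have "(\<lambda>x. restrict x I) \<in> measurable (count_space UNIV) ?N"
      by (simp add: space_PiM)
    thus ?thesis by (simp add: measurable_cong_sets)
  qed
  have "(\<integral>\<omega>. \<Phi> (compose I \<rho> \<omega>) \<partial>PiM I (\<lambda>_. mu0)) = integral\<^sup>L (distr (PiM I (\<lambda>_. mu0)) ?N (compose I \<rho>)) \<Phi>"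
    by (rule integral_distr[symmetric, OF cm meas_PiM_pmf[OF fin]])
  also have "\<dots> = integral\<^sup>L (distr (measure_pmf (Pi_pmf I dflt (\<lambda>_. q))) ?N (\<lambda>x. restrict x I)) \<Phi>"
    unfolding d1 distr_Pi_pmf_PiM[OF fin] ..
  also have "\<dots> = EE I dflt q (\<lambda>x. \<Phi> (restrict x I))"
    unfolding EE_def by (rule integral_distr[OF rmeas meas_PiM_pmf[OF fin]])
  finally show ?thesis .
qed


lemma harm_bound:
  fixes T :: "nat \<Rightarrow> real"
  shows "finite A \<Longrightarrow> (\<Sum>i\<in>A. 1 / real (card {j\<in>A. T i \<le> T j})) \<le> harm (card A)"
proof (induction "card A" arbitrary: A)
  case 0
  hence "A = {}" by simp
  thus ?case by (simp add: harm_def)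
next
  case (Suc n)
  hence Ane: "A \<noteq> {}" by auto
  define m0 where "m0 = Min (T ` A)"
  have "m0 \<in> T ` A" unfolding m0_def using Suc.prems Ane by (intro Min_in) auto
  then obtain m where m: "m \<in> A" "T m = m0" by auto
  have mmin: "T m \<le> T j" if "j \<in> A" for j unfolding m(2) m0_def using Suc.prems that by (intro Min_le) auto
  have cA: "card {j\<in>A. T m \<le> T j} = card A" using mmin by (intro arg_cong[where f=card]) auto
  have fin': "finite (A - {m})" using Suc.prems by auto
  have card': "n = card (A - {m})" using Suc.hyps(2) m(1) Suc.prems by (simp add: card_Diff_singleton)
  have "(\<Sum>i\<in>A. 1 / real (card {j\<in>A. T i \<le> T j})) = 1 / real (card A) + (\<Sum>i\<in>A-{m}. 1 / real (card {j\<in>A. T i \<le> T j}))"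
    using Suc.prems m(1) cA by (simp add: sum.remove)
  also have "(\<Sum>i\<in>A-{m}. 1 / real (card {j\<in>A. T i \<le> T j})) \<le> (\<Sum>i\<in>A-{m}. 1 / real (card {j\<in>A-{m}. T i \<le> T j}))"
  proof (rule sum_mono)
    fix i assume i: "i \<in> A - {m}"
    have "i \<in> {j\<in>A-{m}. T i \<le> T j}" using i by auto
    hence pos: "0 < card {j\<in>A-{m}. T i \<le> T j}" using fin' by (auto simp: card_gt_0_iff)
    have "card {j\<in>A-{m}. T i \<le> T j} \<le> card {j\<in>A. T i \<le> T j}" using Suc.prems by (intro card_mono) auto
    thus "1 / real (card {j\<in>A. T i \<le> T j}) \<le> 1 / real (card {j\<in>A-{m}. T i \<le> T j})"
      using pos by (intro divide_left_mono) auto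
  qed
  also have "(\<Sum>i\<in>A-{m}. 1 / real (card {j\<in>A-{m}. T i \<le> T j})) \<le> harm n"
    using Suc.hyps(1)[OF card' fin'] card' by simp
  finally have fin: "(\<Sum>i\<in>A. 1 / real (card {j\<in>A. T i \<le> T j})) \<le> 1 / real (card A) + harm n" by simp
  have "harm (card A) = harm n + 1 / real (card A)" unfolding Suc.hyps(2)[symmetric]
    by (simp add: harm_Suc inverse_eq_divide)
  thus ?case using fin by simp
qed

lemma harm_le_ln: "n \<ge> 1 \<Longrightarrow> harm n \<le> ln (real n) + (1 :: real)"
  using euler_mascheroni_sequence_decreasing[of 1 n] by (simp add: harm_def)

lemma sum_tk:
  fixes f :: "real \<Rightarrow> real" and T :: "nat \<Rightarrow> real"
  shows "(\<Sum>k=1..Kn n T. f (tk n T k)) = (\<Sum>v\<in>T ` {..<n}. f v)"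
proof -
  define xs where "xs = sorted_list_of_set (T ` {..<n})"
  have len: "length xs = Kn n T" unfolding xs_def Kn_def by simp
  have "(\<Sum>k=1..Kn n T. f (tk n T k)) = (\<Sum>k\<in>Suc ` {..<Kn n T}. f (xs ! (k - 1)))"
    unfolding tk_def xs_def by (intro sum.cong) (simp_all add: image_Suc_lessThan)
  also have "\<dots> = (\<Sum>j<Kn n T. f (xs ! j))" by (subst sum.reindex) auto
  also have "\<dots> = (\<Sum>v\<in>set xs. f v)"
    by (rule sum.reindex_bij_betw[OF bij_betw_nth]) (auto simp: xs_def len Kn_def)
  also have "set xs = T ` {..<n}" unfolding xs_def by simp
  finally show ?thesis .
qed

lemma sum_values:
  fixes T :: "nat \<Rightarrow> real"
  shows "(\<Sum>v\<in>T ` {..<n}. real (card {i\<in>{..<n}. T i = v}) / real (card {i\<in>{..<n}. v \<le> T i}))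
     = (\<Sum>i\<in>{..<n}. 1 / real (card {j\<in>{..<n}. T i \<le> T j}))"
proof -
  have "(\<Sum>i\<in>{..<n}. 1 / real (card {j\<in>{..<n}. T i \<le> T j}))
      = (\<Sum>v\<in>T ` {..<n}. \<Sum>i\<in>{x\<in>{..<n}. T x = v}. 1 / real (card {j\<in>{..<n}. T i \<le> T j}))"
    by (rule sum.image_gen) simp
  also have "\<dots> = (\<Sum>v\<in>T ` {..<n}. \<Sum>i\<in>{x\<in>{..<n}. T x = v}. 1 / real (card {j\<in>{..<n}. v \<le> T j}))"
    by (intro sum.cong refl) auto
  also have "\<dots> = (\<Sum>v\<in>T ` {..<n}. real (card {i\<in>{..<n}. T i = v}) / real (card {i\<in>{..<n}. v \<le> T i}))"
    by simp
  finally show ?thesis ..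
qed


lemma tk_in:
  assumes "1 \<le> k" "k \<le> Kn n T"
  shows "tk n T k \<in> T ` {..<n}"
proof -
  have "k - 1 < length (sorted_list_of_set (T ` {..<n}))" using assms by (simp add: Kn_def)
  hence "sorted_list_of_set (T ` {..<n}) ! (k - 1) \<in> set (sorted_list_of_set (T ` {..<n}))" by (rule nth_mem)
  thus ?thesis unfolding tk_def by simp
qed

lemma ev_D:
  assumes "0 \<le> Ti" "0 \<le> t"
  shows "(ennreal Ti \<le> C \<and> min (ennreal Ti) C = ennreal t) \<longleftrightarrow> (Ti = t \<and> ennreal t \<le> C)"
proof
  assume h: "ennreal Ti \<le> C \<and> min (ennreal Ti) C = ennreal t"
  have "ennreal Ti = ennreal t" using h by (metis min.absorb1)
  hence "Ti = t" using assms by simp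
  thus "Ti = t \<and> ennreal t \<le> C" using h by simp
next
  assume "Ti = t \<and> ennreal t \<le> C"
  thus "ennreal Ti \<le> C \<and> min (ennreal Ti) C = ennreal t" by (simp add: min_def)
qed

lemma ev_N:
  assumes "0 \<le> Ti"
  shows "(ennreal t \<le> min (ennreal Ti) C) \<longleftrightarrow> (t \<le> Ti \<and> ennreal t \<le> C)"
  using assms by (simp add: ennreal_le_iff)

lemma xi_bound:
  assumes p1: "0 < p1" "p1 < 1" and PM: "prob_space M" and SM: "sets M = sets borel"
    and T: "\<And>i. i < n \<Longrightarrow> 0 \<le> T i" and k: "1 \<le> k" "k \<le> Kn n T"
  shows "\<bar>xi4 p1 M n T k\<bar> \<le> real (dk n T k) / real (nk n T k)"
proof -
  define t where "t = tk n T k"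
  obtain j0 where j0: "j0 < n" "T j0 = t" using tk_in[OF k] unfolding t_def by auto
  have t0: "0 \<le> t" using T j0 by auto
  define I where "I = {..<n}"
  define S where "S = {i\<in>{..<n}. T i = t}"
  define U where "U = {i\<in>{..<n}. t \<le> T i}"
  define q where "q = qq p1 M t"
  have finI: "finite I" unfolding I_def by simp
  have UI: "U \<subseteq> I" unfolding U_def I_def by auto
  have SU: "S \<subseteq> U" unfolding S_def U_def by auto
  have Sne: "S \<noteq> {}" unfolding S_def using j0 by auto
  have pop: "popM p1 M n = PiM I (\<lambda>_. pair_measure (measure_pmf (bernoulli_pmf p1)) M)"
    unfolding popM_def I_def ..
  have yi: "compose I (rho t) \<omega> i = (Zr \<omega> i, ennreal t \<le> Cr \<omega> i)" if "i \<in> I" for \<omega> i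
    using that unfolding compose_def rho_def Zr_def Cr_def by simp
  have Dk_eq: "Dk n T k \<omega> = cR S (compose I (rho t) \<omega>)" for \<omega>
  proof -
    have "{i\<in>{..<n}. Deltar T \<omega> i \<and> Wr T \<omega> i = ennreal (tk n T k)} = {i\<in>S. snd (compose I (rho t) \<omega> i)}"
      unfolding S_def using ev_D[OF T t0] yi unfolding Deltar_def Wr_def t_def[symmetric] I_def by auto
    thus ?thesis unfolding Dk_def cR_def by simp
  qed
  have N1_eq: "N1k n T k \<omega> = cN1 U (compose I (rho t) \<omega>)" for \<omega>
  proof -
    have "{i\<in>{..<n}. Zr \<omega> i \<and> ennreal (tk n T k) \<le> Wr T \<omega> i} = {i\<in>U. fst (compose I (rho t) \<omega> i) \<and> snd (compose I (rho t) \<omega> i)}"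
      unfolding U_def using ev_N[OF T] yi unfolding Wr_def t_def[symmetric] I_def by auto
    thus ?thesis unfolding N1k_def cN1_def by simp
  qed
  have N0_eq: "N0k n T k \<omega> = cN0 U (compose I (rho t) \<omega>)" for \<omega>
  proof -
    have "{i\<in>{..<n}. \<not> Zr \<omega> i \<and> ennreal (tk n T k) \<le> Wr T \<omega> i} = {i\<in>U. \<not> fst (compose I (rho t) \<omega> i) \<and> snd (compose I (rho t) \<omega> i)}"
      unfolding U_def using ev_N[OF T] yi unfolding Wr_def t_def[symmetric] I_def by auto
    thus ?thesis unfolding N0k_def cN0_def by simp
  qed
  have Vk_eq: "Vk n T k \<omega> = cV S U (compose I (rho t) \<omega>)" for \<omega>
    unfolding Vk_def cV_def Nk_def Dk_eq N1_eq N0_eq ..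
  have cR_r: "cR S (restrict x I) = cR S x" for x
    unfolding cR_def using SU UI by (intro arg_cong[where f=card]) auto
  have cN1_r: "cN1 U (restrict x I) = cN1 U x" for x
    unfolding cN1_def using UI by (intro arg_cong[where f=card]) auto
  have cN0_r: "cN0 U (restrict x I) = cN0 U x" for x
    unfolding cN0_def using UI by (intro arg_cong[where f=card]) auto
  have cV_r: "cV S U (restrict x I) = cV S U x" for x
    unfolding cV_def cR_r cN1_r cN0_r ..
  have bridge: "(\<integral>\<omega>. \<Phi> (compose I (rho t) \<omega>) \<partial>popM p1 M n) = EE I (False, False) q (\<lambda>x. \<Phi> (restrict x I))"
    for \<Phi> :: "(nat \<Rightarrow> bool \<times> bool) \<Rightarrow> real"
    unfolding pop q_def
    by (rule integral_bridge[OF finI _ rho_meas[OF p1 PM SM] distr_rho[OF p1 PM SM]])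
       (intro prob_space_pair measure_pmf.prob_space_axioms PM)
  have ID: "(\<integral>\<omega>. real (Dk n T k \<omega>) \<partial>popM p1 M n) = EE I (False, False) q (\<lambda>x. real (cR S x))"
    using bridge[of "\<lambda>y. real (cR S y)"] by (simp add: Dk_eq cR_r)
  have IV: "(\<integral>\<omega>. Vk n T k \<omega> \<partial>popM p1 M n) = EE I (False, False) q (cV S U)"
    using bridge[of "cV S U"] by (simp add: Vk_eq cV_r)
  have hk: "hk n T k = real (card S) / real (card U)"
    unfolding hk_def dk_def nk_def S_def U_def t_def ..
  have phik: "phik p1 M n T k = pmf q (True,True) / (pmf q (True,True) + pmf q (False,True))"
    unfolding phik_def Gmix_def q_def pmf_qq_TT[OF p1 PM SM] pmf_qq_FT[OF p1 PM SM] t_def ..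
  have "\<bar>xi4 p1 M n T k\<bar> \<le> real (card S) / real (card U)"
    unfolding xi4_def ID IV hk phik
    by (rule core[OF finI UI SU Sne])
  moreover have "real (dk n T k) / real (nk n T k) = real (card S) / real (card U)"
    unfolding dk_def nk_def S_def U_def t_def ..
  ultimately show ?thesis by simp
qed

lemma sum_bound:
  assumes p1: "0 < p1" "p1 < 1" and PM: "prob_space M" and SM: "sets M = sets borel"
    and T: "\<And>i. i < n \<Longrightarrow> 0 \<le> T i"
  shows "\<bar>\<Sum>k = 1..<Kn n T. xi4 p1 M n T k\<bar> \<le> harm n"
proof -
  define f where "f v = real (card {i\<in>{..<n}. T i = v}) / real (card {i\<in>{..<n}. v \<le> T i})" for v
  have fk: "real (dk n T k) / real (nk n T k) = f (tk n T k)" for k unfolding f_def dk_def nk_def ..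
  have "\<bar>\<Sum>k = 1..<Kn n T. xi4 p1 M n T k\<bar> \<le> (\<Sum>k = 1..<Kn n T. \<bar>xi4 p1 M n T k\<bar>)"
    by (rule sum_abs)
  also have "\<dots> \<le> (\<Sum>k = 1..<Kn n T. f (tk n T k))"
    by (intro sum_mono) (use xi_bound[of p1 M n T, OF p1 PM SM T] fk in auto)
  also have "\<dots> \<le> (\<Sum>k = 1..Kn n T. f (tk n T k))"
    by (intro sum_mono2) (auto simp: f_def)
  also have "\<dots> = (\<Sum>v\<in>T ` {..<n}. f v)" by (rule sum_tk)
  also have "\<dots> = (\<Sum>i\<in>{..<n}. 1 / real (card {j\<in>{..<n}. T i \<le> T j}))"
    unfolding f_def by (rule sum_values)
  also have "\<dots> \<le> harm (card {..<n})" by (rule harm_bound) simp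
  finally show ?thesis by simp
qed

theorem lemmaA11:
  fixes p1 :: real and M :: "(ennreal \<times> ennreal) measure"
    and Tseq :: "nat \<Rightarrow> nat \<Rightarrow> real"
  assumes "0 < p1" and "p1 < 1"
    and "prob_space M" and "sets M = sets borel"
    and "\<And>n i. i < n \<Longrightarrow> 0 \<le> Tseq n i"
  shows "(\<lambda>n. \<Sum>k = 1..<Kn n (Tseq n). xi4 p1 M n (Tseq n) k) \<in> O(\<lambda>n. ln (real n))"
proof (rule bigoI[where c=2])
  have "\<bar>\<Sum>k = 1..<Kn n (Tseq n). xi4 p1 M n (Tseq n) k\<bar> \<le> 2 * \<bar>ln (real n)\<bar>" if n: "n \<ge> 3" for n
  proof -
    have "\<bar>\<Sum>k = 1..<Kn n (Tseq n). xi4 p1 M n (Tseq n) k\<bar> \<le> harm n"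
      by (rule sum_bound[OF assms(1-4)]) (rule assms(5))
    also have "\<dots> \<le> ln (real n) + 1" using n by (intro harm_le_ln) auto
    also have "1 \<le> ln (real n)"
    proof -
      have "exp 1 \<le> (3::real)" by (rule exp_le)
      also have "\<dots> \<le> real n" using n by simp
      finally have "ln (exp 1) \<le> ln (real n)" using n by (subst ln_le_cancel_iff) auto
      thus ?thesis by simp
    qed
    hence "ln (real n) + 1 \<le> 2 * \<bar>ln (real n)\<bar>" by simp
    finally show ?thesis .
  qed
  thus "\<forall>\<^sub>F n in at_top. norm (\<Sum>k = 1..<Kn n (Tseq n). xi4 p1 M n (Tseq n) k) \<le> 2 * norm (ln (real n))"
    unfolding real_norm_def by (intro eventually_at_top_linorderI[of 3]) auto
qed


end
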